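(* Let $D$ be a diagram of a knot $K$, let $E=\{e_1,\dots,e_n\}$ be a generating set of seeds for $D$ with $n=\omega(D)$ elements, and let $H$ be a Coxeter group with Coxeter rank $r(H)=n$. Let $\mathcal{A}\subseteq\mathrm{Gen}(H)$ be a robust set. Then the following are equivalent. (i) There is a surjective homomorphism $\pi_1(S^3\setminus K)\twoheadrightarrow H$ sending meridians to reflections, equivalently an $H$-coloring of $D$ by reflections whose labels generate $H$. (ii) There exist $R=\{\rho_1,\dots,\rho_n\}\in\mathcal{A}$ and a bijection $f:E\to R$ such that labeling each seed $e_i$ by $f(e_i)$ extends to an $H$-coloring of $D$.
   Context: A Coxeter group is given by generators $s$ with $s^2=1$ and relations $(st)^{k}=1$ prescribed by a labeled graph. A reflection is any conjugate of a generator. The Coxeter rank $r(H)$ is the minimal number of reflections generating $H$. In a knot diagram $D$, at a crossing with overstrand $o$ and understrands $u_1,u_2$, a coloring move adds $u_2$ to a set of colored strands that already contains $o$ and $u_1$. A generating set of seeds is a set of strands from which coloring moves eventually color every strand. The Wirtinger number $\omega(D)$ is the minimal size of a generating set of seeds. An $H$-coloring of $D$ by reflections assigns a reflection $g_s\in H$ to each strand $s$ such that $g_o g_{u_1} g_o^{-1}=g_{u_2}$ at every crossing. $\mathrm{Gen}(H)$ denotes the set of generating sets of $H$ consisting of exactly $r(H)$ reflections. Two members $\{r_i\},\{\rho_i\}$ are equivalent if $\{g^{-1}r_ig\}=\{\rho_i\}$ for some $g\in H$. A subset $\mathcal{A}\subseteq\mathrm{Gen}(H)$ is robust if it meets every equivalence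 class. *)

theory Defs
  imports "HOL-Algebra.Generated_Groups"
begin

text \<open>A knot diagram with N >= 1 strands (arcs) 0..N-1, traversed in order along
the knot. At crossing i (i < N) the understrand i ends and the understrand
(i+1) mod N begins; the overstrand of crossing i is ov i.\<close>

definition knot_diagram :: "nat \<Rightarrow> (nat \<Rightarrow> nat) \<Rightarrow> bool" where
  "knot_diagram N ov \<longleftrightarrow> 1 \<le> N \<and> (\<forall>i<N. ov i < N)"

definition crossings :: "nat \<Rightarrow> (nat \<Rightarrow> nat) \<Rightarrow> (nat \<times> nat \<times> nat) set" where
  "crossings N ov = {(ov i, i, Suc i mod N) | i. i < N}"

text \<open>Strands colored from a seed set E by repeated coloring moves
(either understrand may play the role of u1).\<close>

inductive_set colored_from :: "nat \<Rightarrow> (nat \<Rightarrow> nat) \<Rightarrow> nat set \<Rightarrow> nat set"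
  for N ov E where
  seed: "e \<in> E \<Longrightarrow> e \<in> colored_from N ov E"
| move1: "(a, u1, u2) \<in> crossings N ov \<Longrightarrow> a \<in> colored_from N ov E \<Longrightarrow>
          u1 \<in> colored_from N ov E \<Longrightarrow> u2 \<in> colored_from N ov E"
| move2: "(a, u1, u2) \<in> crossings N ov \<Longrightarrow> a \<in> colored_from N ov E \<Longrightarrow>
          u2 \<in> colored_from N ov E \<Longrightarrow> u1 \<in> colored_from N ov E"

definition generating_seeds :: "nat \<Rightarrow> (nat \<Rightarrow> nat) \<Rightarrow> nat set \<Rightarrow> bool" where
  "generating_seeds N ov E \<longleftrightarrow> E \<subseteq> {..<N} \<and> colored_from N ov E = {..<N}"

definition wirtinger_number :: "nat \<Rightarrow> (nat \<Rightarrow> nat) \<Rightarrow> nat" where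
  "wirtinger_number N ov = (LEAST k. \<exists>E. generating_seeds N ov E \<and> card E = k)"

text \<open>Coxeter matrix on generators S; m s t = 0 encodes the label infinity
(no relation).\<close>

definition coxeter_matrix :: "'b set \<Rightarrow> ('b \<Rightarrow> 'b \<Rightarrow> nat) \<Rightarrow> bool" where
  "coxeter_matrix S m \<longleftrightarrow>
     (\<forall>s\<in>S. m s s = 1) \<and> (\<forall>s\<in>S. \<forall>t\<in>S. m s t = m t s) \<and>
     (\<forall>s\<in>S. \<forall>t\<in>S. s \<noteq> t \<longrightarrow> m s t \<noteq> 1)"

inductive cox_eq :: "'b set \<Rightarrow> ('b \<Rightarrow> 'b \<Rightarrow> nat) \<Rightarrow> 'b list \<Rightarrow> 'b list \<Rightarrow> bool"
  for S m where
  refl: "cox_eq S m w w"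
| sym: "cox_eq S m v w \<Longrightarrow> cox_eq S m w v"
| trans: "cox_eq S m u v \<Longrightarrow> cox_eq S m v w \<Longrightarrow> cox_eq S m u w"
| square: "s \<in> S \<Longrightarrow> cox_eq S m (u @ [s, s] @ v) (u @ v)"
| braid: "s \<in> S \<Longrightarrow> t \<in> S \<Longrightarrow> m s t \<noteq> 0 \<Longrightarrow>
          cox_eq S m (u @ concat (replicate (m s t) [s, t]) @ v) (u @ v)"

definition cox_class :: "'b set \<Rightarrow> ('b \<Rightarrow> 'b \<Rightarrow> nat) \<Rightarrow> 'b list \<Rightarrow> 'b list set" where
  "cox_class S m w = {v \<in> lists S. cox_eq S m w v}"

definition coxeter_group :: "'b set \<Rightarrow> ('b \<Rightarrow> 'b \<Rightarrow> nat) \<Rightarrow> 'b list set monoid" where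
  "coxeter_group S m =
     \<lparr> carrier = cox_class S m ` lists S,
       mult = (\<lambda>X Y. {w \<in> lists S. \<exists>x\<in>X. \<exists>y\<in>Y. cox_eq S m (x @ y) w}),
       one = cox_class S m [] \<rparr>"

definition reflections :: "'b set \<Rightarrow> ('b \<Rightarrow> 'b \<Rightarrow> nat) \<Rightarrow> 'b list set set" where
  "reflections S m =
     {x \<otimes>\<^bsub>coxeter_group S m\<^esub> cox_class S m [s] \<otimes>\<^bsub>coxeter_group S m\<^esub> inv\<^bsub>coxeter_group S m\<^esub> x
      | x s. x \<in> carrier (coxeter_group S m) \<and> s \<in> S}"

definition coxeter_rank :: "'b set \<Rightarrow> ('b \<Rightarrow> 'b \<Rightarrow> nat) \<Rightarrow> nat" where
  "coxeter_rank S m = (LEAST k. \<exists>R. R \<subseteq> reflections S m \<and> finite R \<and> card R = k \<and>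
       generate (coxeter_group S m) R = carrier (coxeter_group S m))"

definition Gen :: "'b set \<Rightarrow> ('b \<Rightarrow> 'b \<Rightarrow> nat) \<Rightarrow> 'b list set set set" where
  "Gen S m = {R. R \<subseteq> reflections S m \<and> finite R \<and> card R = coxeter_rank S m \<and>
       generate (coxeter_group S m) R = carrier (coxeter_group S m)}"

definition robust :: "'b set \<Rightarrow> ('b \<Rightarrow> 'b \<Rightarrow> nat) \<Rightarrow> 'b list set set set \<Rightarrow> bool" where
  "robust S m A \<longleftrightarrow> (\<forall>R\<in>Gen S m. \<exists>g\<in>carrier (coxeter_group S m).
      (\<lambda>r. inv\<^bsub>coxeter_group S m\<^esub> g \<otimes>\<^bsub>coxeter_group S m\<^esub> r \<otimes>\<^bsub>coxeter_group S m\<^esub> g) ` R \<in> A)"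

definition reflection_coloring ::
  "'b set \<Rightarrow> ('b \<Rightarrow> 'b \<Rightarrow> nat) \<Rightarrow> nat \<Rightarrow> (nat \<Rightarrow> nat) \<Rightarrow> (nat \<Rightarrow> 'b list set) \<Rightarrow> bool" where
  "reflection_coloring S m N ov g \<longleftrightarrow>
     (\<forall>i<N. g i \<in> reflections S m) \<and>
     (\<forall>(a, u1, u2)\<in>crossings N ov.
        g a \<otimes>\<^bsub>coxeter_group S m\<^esub> g u1 \<otimes>\<^bsub>coxeter_group S m\<^esub> inv\<^bsub>coxeter_group S m\<^esub> g a = g u2)"

end

theory Submission imports Defs begin

lemma cox_eq_cong: "cox_eq S m u v \<Longrightarrow> cox_eq S m (x @ u @ y) (x @ v @ y)"
proof (induction rule: cox_eq.induct)
  case (refl w) then show ?case by (rule cox_eq.refl)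
next
  case (sym v w) then show ?case by (blast intro: cox_eq.sym)
next
  case (trans u v w) then show ?case by (blast intro: cox_eq.trans)
next
  case (square s u v)
  from cox_eq.square[OF square, where u="x @ u" and v="v @ y"] show ?case by simp
next
  case (braid s t u v)
  from cox_eq.braid[where S=S and m=m and s=s and t=t and u="x @ u" and v="v @ y", OF braid] show ?case by simp
qed

lemma cox_class_eq: "cox_eq S m x y \<Longrightarrow> cox_class S m x = cox_class S m y"
  unfolding cox_class_def by (auto intro: cox_eq.trans cox_eq.sym)

lemma cox_mult: "x \<in> lists S \<Longrightarrow> y \<in> lists S \<Longrightarrow>
  cox_class S m x \<otimes>\<^bsub>coxeter_group S m\<^esub> cox_class S m y = cox_class S m (x @ y)"
proof -
  assume x: "x \<in> lists S" and y: "y \<in> lists S"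
  have "cox_eq S m (x @ y) w" if "cox_eq S m x x'" "cox_eq S m y y'" "cox_eq S m (x' @ y') w" for x' y' w
  proof -
    have "cox_eq S m (x @ y) (x' @ y)" using cox_eq_cong[OF that(1), of "[]" y] by simp
    moreover have "cox_eq S m (x' @ y) (x' @ y')" using cox_eq_cong[OF that(2), of x' "[]"] by simp
    ultimately show ?thesis using that(3) by (meson cox_eq.trans)
  qed
  moreover have "x \<in> cox_class S m x" "y \<in> cox_class S m y"
    using x y by (auto simp: cox_class_def intro: cox_eq.refl)
  ultimately show ?thesis
    unfolding coxeter_group_def by (auto simp: cox_class_def)
qed

lemma rev_cancel: "x \<in> lists S \<Longrightarrow> cox_eq S m (rev x @ x) []"
proof (induction x)
  case Nil then show ?case by (simp add: cox_eq.refl)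
next
  case (Cons a x)
  then have "cox_eq S m (rev x @ [a, a] @ x) (rev x @ x)" by (intro cox_eq.square) auto
  then show ?case using Cons by (auto intro: cox_eq.trans)
qed

lemma cox_group: "group (coxeter_group S m)"
proof (rule groupI)
  let ?G = "coxeter_group S m"
  have car: "carrier ?G = cox_class S m ` lists S" by (simp add: coxeter_group_def)
  have one: "\<one>\<^bsub>?G\<^esub> = cox_class S m []" by (simp add: coxeter_group_def)
  show "x \<otimes>\<^bsub>?G\<^esub> y \<in> carrier ?G" if "x \<in> carrier ?G" "y \<in> carrier ?G" for x y
  proof -
    from that obtain a b where "a \<in> lists S" "b \<in> lists S" "x = cox_class S m a" "y = cox_class S m b"
      by (auto simp: car)
    moreover then have "a @ b \<in> lists S" by simp
    ultimately show ?thesis by (simp add: car cox_mult)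
  qed
  show "\<one>\<^bsub>?G\<^esub> \<in> carrier ?G" by (auto simp: car one)
  show "x \<otimes>\<^bsub>?G\<^esub> y \<otimes>\<^bsub>?G\<^esub> z = x \<otimes>\<^bsub>?G\<^esub> (y \<otimes>\<^bsub>?G\<^esub> z)"
    if "x \<in> carrier ?G" "y \<in> carrier ?G" "z \<in> carrier ?G" for x y z
  proof -
    from that obtain a b c where "a \<in> lists S" "b \<in> lists S" "c \<in> lists S" "x = cox_class S m a" "y = cox_class S m b" "z = cox_class S m c"
      by (auto simp: car)
    then show ?thesis by (simp add: cox_mult)
  qed
  show "\<one>\<^bsub>?G\<^esub> \<otimes>\<^bsub>?G\<^esub> x = x" if "x \<in> carrier ?G" for x
  proof -
    from that obtain a where "a \<in> lists S" "x = cox_class S m a" by (auto simp: car)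
    then show ?thesis using cox_mult[of "[]" S a m] by (simp add: one)
  qed
  show "\<exists>y\<in>carrier ?G. y \<otimes>\<^bsub>?G\<^esub> x = \<one>\<^bsub>?G\<^esub>" if "x \<in> carrier ?G" for x
  proof -
    from that obtain w where w: "w \<in> lists S" "x = cox_class S m w" by (auto simp: car)
    have "cox_class S m (rev w) \<otimes>\<^bsub>?G\<^esub> x = \<one>\<^bsub>?G\<^esub>"
    proof -
      have "rev w \<in> lists S" using w by auto
      then have "cox_class S m (rev w) \<otimes>\<^bsub>?G\<^esub> x = cox_class S m (rev w @ w)"
        using cox_mult[OF \<open>rev w \<in> lists S\<close> w(1), of m] w(2) by simp
      also have "\<dots> = cox_class S m []" by (rule cox_class_eq[OF rev_cancel[OF w(1)]])
      finally show ?thesis by (simp add: one)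
    qed
    moreover have "cox_class S m (rev w) \<in> carrier ?G" using w by (auto simp: car)
    ultimately show ?thesis by blast
  qed
qed

lemma (in group) canc1: "x \<in> carrier G \<Longrightarrow> y \<in> carrier G \<Longrightarrow> x \<otimes> (inv x \<otimes> y) = y"
  by (simp add: m_assoc[symmetric])
lemma (in group) canc2: "x \<in> carrier G \<Longrightarrow> y \<in> carrier G \<Longrightarrow> inv x \<otimes> (x \<otimes> y) = y"
  by (simp add: m_assoc[symmetric])

lemma (in group) conj_hom:
  assumes "x \<in> carrier G" "y \<in> carrier G" "h \<in> carrier G"
  shows "(inv h \<otimes> x \<otimes> h) \<otimes> (inv h \<otimes> y \<otimes> h) \<otimes> inv (inv h \<otimes> x \<otimes> h) = inv h \<otimes> (x \<otimes> y \<otimes> inv x) \<otimes> h"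
  using assms by (simp add: m_assoc inv_mult_group canc1 canc2)

lemma (in group) conj_inj:
  assumes "h \<in> carrier G" shows "inj_on (\<lambda>r. inv h \<otimes> r \<otimes> h) (carrier G)"
  using assms by (intro inj_onI) simp

lemma (in group) conj_conj:
  assumes "x \<in> carrier G" "y \<in> carrier G" "h \<in> carrier G"
  shows "inv h \<otimes> (x \<otimes> y \<otimes> inv x) \<otimes> h = (inv h \<otimes> x) \<otimes> y \<otimes> inv (inv h \<otimes> x)"
  using assms by (simp add: m_assoc inv_mult_group canc1 canc2)

lemma refl_carrier: "reflections S m \<subseteq> carrier (coxeter_group S m)"
proof
  interpret G: group "coxeter_group S m" by (rule cox_group)
  fix r assume "r \<in> reflections S m"
  then obtain x s where "r = x \<otimes>\<^bsub>coxeter_group S m\<^esub> cox_class S m [s] \<otimes>\<^bsub>coxeter_group S m\<^esub> inv\<^bsub>coxeter_group S m\<^esub> x"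
    "x \<in> carrier (coxeter_group S m)" "s \<in> S" unfolding reflections_def by blast
  moreover have "cox_class S m [s] \<in> carrier (coxeter_group S m)" using \<open>s \<in> S\<close>
    by (auto simp: coxeter_group_def)
  ultimately show "r \<in> carrier (coxeter_group S m)" by simp
qed

lemma refl_conj:
  assumes "r \<in> reflections S m" "h \<in> carrier (coxeter_group S m)"
  shows "inv\<^bsub>coxeter_group S m\<^esub> h \<otimes>\<^bsub>coxeter_group S m\<^esub> r \<otimes>\<^bsub>coxeter_group S m\<^esub> h \<in> reflections S m"
proof -
  interpret G: group "coxeter_group S m" by (rule cox_group)
  obtain x s where r: "r = x \<otimes>\<^bsub>coxeter_group S m\<^esub> cox_class S m [s] \<otimes>\<^bsub>coxeter_group S m\<^esub> inv\<^bsub>coxeter_group S m\<^esub> x"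
    "x \<in> carrier (coxeter_group S m)" "s \<in> S" using assms(1) unfolding reflections_def by blast
  have c: "cox_class S m [s] \<in> carrier (coxeter_group S m)" using \<open>s \<in> S\<close>
    by (auto simp: coxeter_group_def)
  have "inv\<^bsub>coxeter_group S m\<^esub> h \<otimes>\<^bsub>coxeter_group S m\<^esub> r \<otimes>\<^bsub>coxeter_group S m\<^esub> h
     = (inv\<^bsub>coxeter_group S m\<^esub> h \<otimes>\<^bsub>coxeter_group S m\<^esub> x) \<otimes>\<^bsub>coxeter_group S m\<^esub> cox_class S m [s] \<otimes>\<^bsub>coxeter_group S m\<^esub> inv\<^bsub>coxeter_group S m\<^esub> (inv\<^bsub>coxeter_group S m\<^esub> h \<otimes>\<^bsub>coxeter_group S m\<^esub> x)"
    using G.conj_conj[OF r(2) c assms(2)] r(1) by simp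
  moreover have "inv\<^bsub>coxeter_group S m\<^esub> h \<otimes>\<^bsub>coxeter_group S m\<^esub> x \<in> carrier (coxeter_group S m)"
    using r(2) assms(2) by simp
  ultimately show ?thesis using r(3) unfolding reflections_def by blast
qed

lemma seeds_generate:
  assumes "reflection_coloring S m N ov g" "generating_seeds N ov E"
  shows "g ` {..<N} \<subseteq> generate (coxeter_group S m) (g ` E)"
proof -
  interpret G: group "coxeter_group S m" by (rule cox_group)
  have EN: "E \<subseteq> {..<N}" using assms(2) by (simp add: generating_seeds_def)
  have gc: "g i \<in> carrier (coxeter_group S m)" if "i < N" for i
    using assms(1) that refl_carrier unfolding reflection_coloring_def by blast
  have sub: "g ` E \<subseteq> carrier (coxeter_group S m)" using EN gc by auto
  have cr: "g a \<otimes>\<^bsub>coxeter_group S m\<^esub> g u1 \<otimes>\<^bsub>coxeter_group S m\<^esub> inv\<^bsub>coxeter_group S m\<^esub> g a = g u2"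
    if "(a, u1, u2) \<in> crossings N ov" for a u1 u2
    using assms(1) that unfolding reflection_coloring_def by blast
  have u1N: "u1 < N" if "(a, u1, u2) \<in> crossings N ov" for a u1 u2
    using that unfolding crossings_def by auto
  have "g i \<in> generate (coxeter_group S m) (g ` E)" if "i \<in> colored_from N ov E" for i
    using that
  proof (induction rule: colored_from.induct)
    case (seed e) then show ?case by (auto intro: generate.incl)
  next
    case (move1 a u1 u2)
    have "inv\<^bsub>coxeter_group S m\<^esub> g a \<in> generate (coxeter_group S m) (g ` E)"
      using G.generate_m_inv_closed[OF sub move1.IH(1)] .
    then show ?case using cr[OF move1(1)] move1.IH by (metis generate.eng)
  next
    case (move2 a u1 u2)
    have ga: "g a \<in> carrier (coxeter_group S m)" using G.generate_in_carrier[OF sub move2.IH(1)] .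
    have gu: "g u1 \<in> carrier (coxeter_group S m)" using gc[OF u1N[OF move2(1)]] .
    have "g u1 = inv\<^bsub>coxeter_group S m\<^esub> g a \<otimes>\<^bsub>coxeter_group S m\<^esub> g u2 \<otimes>\<^bsub>coxeter_group S m\<^esub> g a"
    proof -
      have "inv\<^bsub>coxeter_group S m\<^esub> g a \<otimes>\<^bsub>coxeter_group S m\<^esub> (g a \<otimes>\<^bsub>coxeter_group S m\<^esub> g u1 \<otimes>\<^bsub>coxeter_group S m\<^esub> inv\<^bsub>coxeter_group S m\<^esub> g a) \<otimes>\<^bsub>coxeter_group S m\<^esub> g a = g u1"
        using ga gu by (simp add: G.m_assoc G.canc2)
      then show ?thesis using cr[OF move2(1)] by simp
    qed
    moreover have "inv\<^bsub>coxeter_group S m\<^esub> g a \<in> generate (coxeter_group S m) (g ` E)"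
      using G.generate_m_inv_closed[OF sub move2.IH(1)] .
    ultimately show ?case using move2.IH by (metis generate.eng)
  qed
  then show ?thesis using assms(2) unfolding generating_seeds_def by auto
qed

theorem lemma3p1:
  fixes N :: nat and ov :: "nat \<Rightarrow> nat" and E :: "nat set"
    and S :: "'b set" and m :: "'b \<Rightarrow> 'b \<Rightarrow> nat" and A :: "'b list set set set"
  assumes "knot_diagram N ov"
    and "generating_seeds N ov E"
    and "card E = wirtinger_number N ov"
    and "coxeter_matrix S m" and "finite S"
    and "coxeter_rank S m = card E"
    and "A \<subseteq> Gen S m" and "robust S m A"
  shows "(\<exists>g. reflection_coloring S m N ov g \<and>
             generate (coxeter_group S m) (g ` {..<N}) = carrier (coxeter_group S m))
     \<longleftrightarrow> (\<exists>R\<in>A. \<exists>f. bij_betw f E R \<and>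
             (\<exists>g. reflection_coloring S m N ov g \<and> (\<forall>e\<in>E. g e = f e)))"
proof -
  interpret G: group "coxeter_group S m" by (rule cox_group)
  let ?G = "coxeter_group S m"
  have EN: "E \<subseteq> {..<N}" using assms(2) by (simp add: generating_seeds_def)
  have fE: "finite E" using EN finite_subset by blast
  have gc: "g i \<in> carrier ?G" if "reflection_coloring S m N ov g" "i < N" for g i
    using that refl_carrier unfolding reflection_coloring_def by blast
  show ?thesis
  proof
    assume "\<exists>g. reflection_coloring S m N ov g \<and> generate ?G (g ` {..<N}) = carrier ?G"
    then obtain g where g: "reflection_coloring S m N ov g" "generate ?G (g ` {..<N}) = carrier ?G"
      by blast
    have sub: "g ` E \<subseteq> carrier ?G" using EN gc[OF g(1)] by auto
    have gen: "generate ?G (g ` E) = carrier ?G"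
    proof
      show "generate ?G (g ` E) \<subseteq> carrier ?G" using G.generate_incl[OF sub] .
      have "generate ?G (g ` {..<N}) \<subseteq> generate ?G (g ` E)"
        by (rule G.generate_subgroup_incl[OF seeds_generate[OF g(1) assms(2)] G.generate_is_subgroup[OF sub]])
      then show "carrier ?G \<subseteq> generate ?G (g ` E)" using g(2) by simp
    qed
    have refl: "g ` E \<subseteq> reflections S m" using g(1) EN unfolding reflection_coloring_def by auto
    have "coxeter_rank S m \<le> card (g ` E)"
      unfolding coxeter_rank_def using refl fE gen by (intro Least_le) auto
    moreover have "card (g ` E) \<le> card E" using card_image_le[OF fE] .
    ultimately have cardeq: "card (g ` E) = card E" using assms(6) by simp
    then have injg: "inj_on g E" using fE by (simp add: eq_card_imp_inj_on)
    have "g ` E \<in> Gen S m" unfolding Gen_def using refl fE gen cardeq assms(6) by auto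
    then obtain h where h: "h \<in> carrier ?G"
      "(\<lambda>r. inv\<^bsub>?G\<^esub> h \<otimes>\<^bsub>?G\<^esub> r \<otimes>\<^bsub>?G\<^esub> h) ` (g ` E) \<in> A"
      using assms(8) unfolding robust_def by blast
    define c where "c = (\<lambda>r. inv\<^bsub>?G\<^esub> h \<otimes>\<^bsub>?G\<^esub> r \<otimes>\<^bsub>?G\<^esub> h)"
    define g' where "g' = (\<lambda>i. c (g i))"
    have "bij_betw g' E (c ` g ` E)"
    proof -
      have "inj_on c (g ` E)" using G.conj_inj[OF h(1)] sub unfolding c_def
        by (rule inj_on_subset)
      then have "inj_on g' E" unfolding g'_def using injg by (simp add: comp_inj_on[unfolded comp_def])
      then show ?thesis unfolding bij_betw_def g'_def by auto
    qed
    moreover have "reflection_coloring S m N ov g'"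
      unfolding reflection_coloring_def
    proof (intro conjI allI impI ballI)
      fix i assume "i < N"
      then show "g' i \<in> reflections S m" unfolding g'_def c_def
        using g(1) h(1) refl_conj unfolding reflection_coloring_def by blast
    next
      fix x assume x: "x \<in> crossings N ov"
      then obtain a u1 u2 where x': "x = (a, u1, u2)" by (cases x) auto
      have "a < N" "u1 < N" using x x' assms(1) unfolding crossings_def knot_diagram_def by auto
      then have ga: "g a \<in> carrier ?G" and gu: "g u1 \<in> carrier ?G" using gc[OF g(1)] by auto
      have eq: "g a \<otimes>\<^bsub>?G\<^esub> g u1 \<otimes>\<^bsub>?G\<^esub> inv\<^bsub>?G\<^esub> g a = g u2"
        using g(1) x x' unfolding reflection_coloring_def by blast
      have "g' a \<otimes>\<^bsub>?G\<^esub> g' u1 \<otimes>\<^bsub>?G\<^esub> inv\<^bsub>?G\<^esub> g' a = g' u2"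
        unfolding g'_def c_def using G.conj_hom[OF ga gu h(1)] eq by simp
      then show "case x of (a, u1, u2) \<Rightarrow> g' a \<otimes>\<^bsub>?G\<^esub> g' u1 \<otimes>\<^bsub>?G\<^esub> inv\<^bsub>?G\<^esub> g' a = g' u2"
        using x' by simp
    qed
    ultimately show "\<exists>R\<in>A. \<exists>f. bij_betw f E R \<and> (\<exists>g. reflection_coloring S m N ov g \<and> (\<forall>e\<in>E. g e = f e))"
      using h(2) unfolding c_def[symmetric] by blast
  next
    assume "\<exists>R\<in>A. \<exists>f. bij_betw f E R \<and> (\<exists>g. reflection_coloring S m N ov g \<and> (\<forall>e\<in>E. g e = f e))"
    then obtain R f g where R: "R \<in> A" "bij_betw f E R" "reflection_coloring S m N ov g" "\<forall>e\<in>E. g e = f e"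
      by blast
    have "g ` E = R" using R(2,4) unfolding bij_betw_def by (auto simp: image_def)
    then have genR: "generate ?G (g ` E) = carrier ?G" using R(1) assms(7) unfolding Gen_def by auto
    have sub: "g ` {..<N} \<subseteq> carrier ?G" using gc[OF R(3)] by auto
    have "generate ?G (g ` E) \<subseteq> generate ?G (g ` {..<N})" using EN by (intro G.mono_generate) auto
    then have "generate ?G (g ` {..<N}) = carrier ?G" using G.generate_incl[OF sub] genR by auto
    then show "\<exists>g. reflection_coloring S m N ov g \<and> generate ?G (g ` {..<N}) = carrier ?G"
      using R(3) by blast
  qed
qed

end
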